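(* Let $\kappa$ be a regular infinite cardinal and $\mu$ a singular cardinal with $\mathrm{cf}(\mu)=\kappa$. The spaces $({}^{\mu}2,\mu)$ and $({}^{\mu}\kappa,\mu)$ are homeomorphic.
   Context: For ordinals $\delta,\rho$, ${}^{\delta}\rho$ is the set of functions $\delta\to\rho$; for a partial function $s\colon\delta\rightharpoonup\rho$, $[s]=\{f\in{}^{\delta}\rho: s\subseteq f\}$. The ${<}\mu$-box topology on ${}^{\delta}\rho$ has base $\{[s]: |\mathrm{dom}(s)|<\mu\}$; $(X,\mu)$ denotes $X$ with this topology. *)

theory Defs
  imports "HOL-Analysis.Analysis"
begin

text \<open>Cardinals are represented as cardinal orders (well-orders) in the style of
  HOL's BNF cardinal library: the cardinal of a set A is card_of A.\<close>

definition cofinal_in :: "'a rel \<Rightarrow> 'a set \<Rightarrow> bool" where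
  "cofinal_in r X \<longleftrightarrow> X \<subseteq> Field r \<and> (\<forall>a\<in>Field r. \<exists>b\<in>X. (a, b) \<in> r)"

definition cof_is :: "'a rel \<Rightarrow> 'b rel \<Rightarrow> bool" where
  "cof_is r s \<longleftrightarrow>
     (\<exists>X. cofinal_in r X \<and> (card_of X, s) \<in> ordIso) \<and>
     (\<forall>X. cofinal_in r X \<longrightarrow> (s, card_of X) \<in> ordLeq)"

definition regular_cardinal :: "'a rel \<Rightarrow> bool" where
  "regular_cardinal r \<longleftrightarrow> Card_order r \<and> infinite (Field r) \<and> cof_is r r"

definition singular_cardinal :: "'a rel \<Rightarrow> bool" where
  "singular_cardinal r \<longleftrightarrow> Card_order r \<and> infinite (Field r) \<and>
     (\<exists>(X::'a set). cofinal_in r X \<and> (card_of X, r) \<in> ordLess)"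

definition cylinder :: "('i \<rightharpoonup> 'v) \<Rightarrow> ('i \<Rightarrow> 'v) set" where
  "cylinder s = {f. \<forall>x\<in>dom s. s x = Some (f x)}"

text \<open>The <mu-box topology on functions 'i => 'v, where mu = |UNIV :: 'i set|.\<close>
definition box_topology :: "('i \<Rightarrow> 'v) topology" where
  "box_topology = topology_generated_by
     {cylinder s | s. (card_of (dom s), card_of (UNIV :: 'i set)) \<in> ordLess}"

end

theory Submission
  imports Defs
begin

unbundle cardinal_syntax

lemma empty_small: "|{}::'a set| <o |UNIV::'a set|"
proof -
  have "\<not> |UNIV::'a set| \<le>o |{}::'a set|" using card_of_empty3 by blast
  thus ?thesis using not_ordLeq_iff_ordLess[OF card_of_Well_order card_of_Well_order] by blast
qed

lemma box_topspace: "topspace (box_topology :: ('i \<Rightarrow> 'v) topology) = UNIV"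
proof -
  have "cylinder Map.empty = (UNIV :: ('i \<Rightarrow> 'v) set)" by (simp add: cylinder_def)
  moreover have "(cylinder (Map.empty :: 'i \<rightharpoonup> 'v)) \<in> {cylinder s | s::'i \<rightharpoonup> 'v. (card_of (dom s), card_of (UNIV :: 'i set)) \<in> ordLess}"
    using empty_small by auto
  ultimately show ?thesis unfolding box_topology_def topology_generated_by_topspace by blast
qed

lemma openin_box_local:
  assumes "\<forall>f\<in>U. \<exists>s. |dom s| <o |UNIV::'i set| \<and> f \<in> cylinder s \<and> cylinder s \<subseteq> U"
  shows "openin (box_topology :: ('i \<Rightarrow> 'v) topology) U"
proof -
  let ?C = "{cylinder s | s::'i \<rightharpoonup> 'v. |dom s| <o |UNIV::'i set| \<and> cylinder s \<subseteq> U}"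
  have "U = \<Union>?C" using assms by blast
  moreover have "\<forall>c\<in>?C. openin (box_topology :: ('i \<Rightarrow> 'v) topology) c"
    unfolding box_topology_def by (auto intro!: topology_generated_by_Basis)
  ultimately have "openin (box_topology :: ('i \<Rightarrow> 'v) topology) (\<Union>?C)"
    by (intro openin_Union) blast
  thus ?thesis using \<open>U = \<Union>?C\<close> by simp
qed

lemma times_small:
  assumes inf: "infinite (UNIV::'k set)" and kl: "|UNIV::'k set| <o |UNIV::'i set|"
    and A: "|A::'i set| <o |UNIV::'i set|"
  shows "|A \<times> (UNIV::'k set)| <o |UNIV::'i set|"
proof (cases "A = {}")
  case True
  have "|{}::('i\<times>'k) set| \<le>o |{}::'i set|" by (rule card_of_empty)
  thus ?thesis using True A ordLeq_ordLess_trans by fastforce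
next
  case False
  have "|A| \<le>o |UNIV::'k set| \<or> |UNIV::'k set| \<le>o |A|" using ordLeq_total[OF card_of_Well_order card_of_Well_order] by blast
  thus ?thesis
  proof
    assume h: "|A| \<le>o |UNIV::'k set|"
    have "|A \<times> (UNIV::'k set)| =o |UNIV::'k set|"
      using card_of_Times_infinite[OF inf, of A] h False by blast
    thus ?thesis using kl ordIso_ordLess_trans by blast
  next
    assume h: "|UNIV::'k set| \<le>o |A|"
    have "infinite A" using h inf card_of_ordLeq_finite by blast
    hence "|A \<times> (UNIV::'k set)| =o |A|"
      using card_of_Times_infinite[of A "UNIV::'k set"] h by auto
    thus ?thesis using A ordIso_ordLess_trans by blast
  qed
qed

definition Phi :: "('i \<Rightarrow> 'i \<times> 'k) \<Rightarrow> (('k \<Rightarrow> 'a) \<Rightarrow> ('k \<Rightarrow> 'b)) \<Rightarrow> ('i \<Rightarrow> 'a) \<Rightarrow> ('i \<Rightarrow> 'b)" where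
  "Phi e d f = (\<lambda>i. d (\<lambda>b. f (inv e (fst (e i), b))) (snd (e i)))"

lemma Phi_comp:
  assumes "bij e" and "\<And>h. d' (d h) = h"
  shows "Phi e d' (Phi e d f) = f"
proof
  fix i
  have ee: "\<And>p. e (inv e p) = p" using assms(1) by (simp add: bij_is_surj surj_f_inv_f)
  have "Phi e d' (Phi e d f) i = d' (d (\<lambda>b. f (inv e (fst (e i), b)))) (snd (e i))"
    unfolding Phi_def by (simp add: ee)
  also have "\<dots> = f (inv e (e i))" using assms(2) by simp
  also have "\<dots> = f i" using assms(1) by (simp add: bij_is_inj)
  finally show "Phi e d' (Phi e d f) i = f i" .
qed

lemma Phi_cont:
  assumes "bij e"
    and H: "\<And>A::'i set. |A| <o |UNIV::'i set| \<Longrightarrow> |A \<times> (UNIV::'k set)| <o |UNIV::'i set|"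
  shows "continuous_map (box_topology :: ('i \<Rightarrow> 'a) topology) (box_topology :: ('i \<Rightarrow> 'b) topology)
           (Phi (e :: 'i \<Rightarrow> 'i \<times> 'k) d)"
  unfolding box_topology_def[where 'v='b]
proof (rule continuous_on_generated_topo)
  show "Phi e d ` topspace box_topology \<subseteq> \<Union> {cylinder s |s::'i \<rightharpoonup> 'b. |dom s| <o |UNIV::'i set|}"
    using box_topspace[where 'i='i and 'v='b] unfolding box_topology_def by simp
next
  fix U assume "U \<in> {cylinder s |s::'i \<rightharpoonup> 'b. |dom s| <o |UNIV::'i set|}"
  then obtain s where U: "U = cylinder s" and sm: "|dom s| <o |UNIV::'i set|" by blast
  define A where "A = fst ` e ` dom s"
  define D where "D = inv e ` (A \<times> UNIV)"
  have "|A| \<le>o |dom s|" unfolding A_def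
    by (metis card_of_image image_comp)
  hence As: "|A| <o |UNIV::'i set|" using sm ordLeq_ordLess_trans by blast
  have "|D| \<le>o |A \<times> (UNIV::'k set)|" unfolding D_def by (rule card_of_image)
  hence Ds: "|D| <o |UNIV::'i set|" using H[OF As] ordLeq_ordLess_trans by blast
  show "openin box_topology (Phi e d -` U \<inter> topspace box_topology)"
    unfolding box_topspace
  proof (rule openin_box_local, intro ballI)
    fix f assume f: "f \<in> Phi e d -` U \<inter> UNIV"
    define t where "t = (\<lambda>i. if i \<in> D then Some (f i) else None)"
    have dt: "dom t = D" unfolding t_def dom_def by (auto split: if_splits)
    have "f \<in> cylinder t" unfolding cylinder_def t_def dom_def by (auto split: if_splits)
    moreover have "cylinder t \<subseteq> Phi e d -` U \<inter> UNIV"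
    proof
      fix g assume g: "g \<in> cylinder t"
      have agree: "g x = f x" if "x \<in> D" for x
        using g that unfolding cylinder_def t_def dom_def by (auto split: if_splits)
      have "Phi e d g i = Phi e d f i" if "i \<in> dom s" for i
      proof -
        have "inv e (fst (e i), b) \<in> D" for b
          unfolding D_def A_def using that by blast
        hence "(\<lambda>b. g (inv e (fst (e i), b))) = (\<lambda>b. f (inv e (fst (e i), b)))"
          using agree by auto
        thus ?thesis unfolding Phi_def by simp
      qed
      thus "g \<in> Phi e d -` U \<inter> UNIV" using f unfolding U cylinder_def by auto
    qed
    ultimately show "\<exists>s. |dom s| <o |UNIV::'i set| \<and> f \<in> cylinder s \<and> cylinder s \<subseteq> Phi e d -` U \<inter> UNIV"
      using Ds unfolding dt[symmetric] by (intro exI[of _ t] conjI)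
  qed
qed

lemma two_elems:
  assumes "infinite (UNIV::'k set)" obtains a b :: 'k where "a \<noteq> b"
proof -
  obtain a :: 'k where True by blast
  have "UNIV \<noteq> {a}" using assms by (metis finite.emptyI finite_insert)
  then obtain b where "b \<noteq> a" by blast
  thus ?thesis using that by blast
qed

lemma func_bij:
  assumes inf: "infinite (UNIV::'k set)"
  obtains d :: "('k \<Rightarrow> bool) \<Rightarrow> ('k \<Rightarrow> 'k)" where "bij d"
proof -
  obtain a b :: 'k where ab: "a \<noteq> b" using two_elems[OF inf] by blast
  have i1: "inj (\<lambda>(h::'k \<Rightarrow> bool) x. if h x then a else b)"
  proof (rule injI)
    fix h1 h2 :: "'k \<Rightarrow> bool"
    assume "(\<lambda>x. if h1 x then a else b) = (\<lambda>x. if h2 x then a else b)"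
    hence "\<And>x. (if h1 x then a else b) = (if h2 x then a else b)" by (simp add: fun_eq_iff)
    hence "\<And>x. h1 x = h2 x" using ab by (metis (full_types))
    thus "h1 = h2" by blast
  qed
  have "|UNIV::'k set| =o |(UNIV::'k set) \<times> (UNIV::'k set)|"
    using card_of_Times_infinite_simps(2)[OF inf _ card_of_mono1[of "UNIV::'k set" "UNIV::'k set"]] by simp
  hence "\<exists>p::'k \<Rightarrow> 'k \<times> 'k. bij_betw p UNIV UNIV" using card_of_ordIso[of "UNIV::'k set" "UNIV::('k \<times> 'k) set"] by simp
  then obtain p :: "'k \<Rightarrow> 'k \<times> 'k" where p: "bij p" unfolding bij_def by (elim exE)
  have pp: "\<And>q. p (inv p q) = q" using p by (simp add: bij_is_surj surj_f_inv_f)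
  have i2: "inj (\<lambda>(h::'k \<Rightarrow> 'k) x. h (fst (p x)) = snd (p x))"
  proof (rule injI)
    fix h1 h2 :: "'k \<Rightarrow> 'k"
    assume E: "(\<lambda>x. h1 (fst (p x)) = snd (p x)) = (\<lambda>x. h2 (fst (p x)) = snd (p x))"
    show "h1 = h2"
    proof
      fix y
      define z where "z = inv p (y, h1 y)"
      have pz: "p z = (y, h1 y)" unfolding z_def by (rule pp)
      have "(h1 (fst (p z)) = snd (p z)) = (h2 (fst (p z)) = snd (p z))"
        using fun_cong[OF E, of z] by simp
      thus "h1 y = h2 y" using pz by simp
    qed
  qed
  have "|UNIV::('k \<Rightarrow> bool) set| \<le>o |UNIV::('k \<Rightarrow> 'k) set|"
    using i1 card_of_ordLeq[of _ "UNIV::('k \<Rightarrow> 'k) set"] by blast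
  moreover have "|UNIV::('k \<Rightarrow> 'k) set| \<le>o |UNIV::('k \<Rightarrow> bool) set|"
    using i2 card_of_ordLeq[of _ "UNIV::('k \<Rightarrow> bool) set"] by blast
  ultimately have "|UNIV::('k \<Rightarrow> bool) set| =o |UNIV::('k \<Rightarrow> 'k) set|"
    by (simp add: ordIso_iff_ordLeq)
  hence "\<exists>d::('k \<Rightarrow> bool) \<Rightarrow> ('k \<Rightarrow> 'k). bij_betw d UNIV UNIV" using card_of_ordIso[of "UNIV::('k \<Rightarrow> bool) set" "UNIV::('k \<Rightarrow> 'k) set"] by simp
  then obtain d :: "('k \<Rightarrow> bool) \<Rightarrow> ('k \<Rightarrow> 'k)" where "bij d" unfolding bij_def by (elim exE)
  thus ?thesis using that by blast
qed

theorem mainTheorem6: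
  assumes "regular_cardinal (card_of (UNIV :: 'k set))"
    and "singular_cardinal (card_of (UNIV :: 'i set))"
    and "cof_is (card_of (UNIV :: 'i set)) (card_of (UNIV :: 'k set))"
  shows "(box_topology :: ('i \<Rightarrow> bool) topology) homeomorphic_space
         (box_topology :: ('i \<Rightarrow> 'k) topology)"
proof -
  have infk: "infinite (UNIV::'k set)" using assms(1) unfolding regular_cardinal_def Field_card_of by blast
  have infi: "infinite (UNIV::'i set)" using assms(2) unfolding singular_cardinal_def Field_card_of by blast
  obtain X :: "'i set" where X: "cofinal_in |UNIV::'i set| X" "|X| <o |UNIV::'i set|"
    using assms(2) unfolding singular_cardinal_def by blast
  have "|UNIV::'k set| \<le>o |X|" using assms(3) X(1) unfolding cof_is_def by blast
  hence kl: "|UNIV::'k set| <o |UNIV::'i set|" using X(2) ordLeq_ordLess_trans by blast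
  have "|UNIV::'i set| =o |(UNIV::'i set) \<times> (UNIV::'k set)|"
    using card_of_Times_infinite_simps(2)[OF infi, of "UNIV::'k set"] ordLess_imp_ordLeq[OF kl] by simp
  hence "\<exists>e::'i \<Rightarrow> 'i \<times> 'k. bij_betw e UNIV UNIV" using card_of_ordIso[of "UNIV::'i set" "UNIV::('i \<times> 'k) set"] by simp
  then obtain e :: "'i \<Rightarrow> 'i \<times> 'k" where e: "bij e" unfolding bij_def by (elim exE)
  obtain d :: "('k \<Rightarrow> bool) \<Rightarrow> ('k \<Rightarrow> 'k)" where d: "bij d" using func_bij[OF infk] by blast
  have H: "\<And>A::'i set. |A| <o |UNIV::'i set| \<Longrightarrow> |A \<times> (UNIV::'k set)| <o |UNIV::'i set|"
    using times_small[OF infk kl] by blast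
  have d1: "\<And>h. inv d (d h) = h" using d by (simp add: bij_is_inj)
  have d2: "\<And>h. d (inv d h) = h" using d by (simp add: bij_is_surj surj_f_inv_f)
  have "homeomorphic_maps (box_topology :: ('i \<Rightarrow> bool) topology) (box_topology :: ('i \<Rightarrow> 'k) topology)
          (Phi e d) (Phi e (inv d))"
    unfolding homeomorphic_maps_def
  proof (intro conjI ballI)
    show "continuous_map box_topology box_topology (Phi e d)" by (rule Phi_cont[OF e H])
    show "continuous_map box_topology box_topology (Phi e (inv d))" by (rule Phi_cont[OF e H])
    show "Phi e (inv d) (Phi e d x) = x" for x by (rule Phi_comp[where d=d and d'="inv d", OF e d1])
    show "Phi e d (Phi e (inv d) y) = y" for y by (rule Phi_comp[where d="inv d" and d'=d, OF e d2])
  qed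
  thus ?thesis unfolding homeomorphic_space_def by (intro exI)
qed

end
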